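(* Let $p\in(0,1)$ and let $\mathbb D\subset\mathbb{C}$ be the open disk having the segment $[0,1]$ as a diameter. For $f$ holomorphic on $\mathbb D$ define \[ \mathcal B_p f(z)=\frac{p}{(1+z)^2}f\!\left(\frac1{1+z}\right)+\frac{1-p}{(1+z)^2}f\!\left(1-\frac1{1+z}\right), \] \[ \mathcal A_p f(z)=\sum_{n=2}^\infty\left[\frac{p}{(n+z)^2}f\!\left(\frac1{n+z}\right)+\frac{1-p}{(n+z)^2}f\!\left(1-\frac1{n+z}\right)\right]. \] Then (i) $\mathcal A_p$ is a nuclear operator on $\mathcal H^\infty(\mathbb D)$, and (ii) the operator $J_p=(1-\mathcal B_p)^{-1}$ is a well-defined bounded operator on $\mathcal H^\infty(\mathbb D)$.
   Context: $\mathcal H^\infty(\mathbb D)$ denotes the Banach space of bounded holomorphic functions on $\mathbb D$ with the norm $\|f\|=\sup_{z\in\mathbb D}|f(z)|$. Note that $\mathcal A_p+\mathcal B_p=\mathcal L_p$, where $\mathcal{L}_p f(z)=\sum_{n\ge1}\bigl[\frac{p}{(n+z)^2}f(\frac{1}{n+z})+\frac{1-p}{(n+z)^2}f(1-\frac{1}{n+z})\bigr]$. *)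

theory Defs
  imports "HOL-Analysis.Analysis"
begin

definition DD :: "complex set" where
  "DD = ball (1/2) (1/2)"

text \<open>H-infinity of DD. Elements are represented as functions on the whole
  complex plane that vanish outside DD (canonical representatives), so that
  equality of elements is plain equality of functions.\<close>
definition Hinf :: "(complex \<Rightarrow> complex) set" where
  "Hinf = {f. f holomorphic_on DD \<and> bounded (f ` DD) \<and> (\<forall>z. z \<notin> DD \<longrightarrow> f z = 0)}"

definition hnorm :: "(complex \<Rightarrow> complex) \<Rightarrow> real" where
  "hnorm f = (SUP z\<in>DD. cmod (f z))"

definition branch_term :: "real \<Rightarrow> nat \<Rightarrow> (complex \<Rightarrow> complex) \<Rightarrow> complex \<Rightarrow> complex" where
  "branch_term p n f z =
     complex_of_real p / (of_nat n + z)^2 * f (1 / (of_nat n + z))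
     + complex_of_real (1 - p) / (of_nat n + z)^2 * f (1 - 1 / (of_nat n + z))"

definition B_op :: "real \<Rightarrow> (complex \<Rightarrow> complex) \<Rightarrow> (complex \<Rightarrow> complex)" where
  "B_op p f = (\<lambda>z. if z \<in> DD then branch_term p 1 f z else 0)"

definition A_op :: "real \<Rightarrow> (complex \<Rightarrow> complex) \<Rightarrow> (complex \<Rightarrow> complex)" where
  "A_op p f = (\<lambda>z. if z \<in> DD then (\<Sum>n. branch_term p (n + 2) f z) else 0)"

definition lin_functional :: "((complex \<Rightarrow> complex) \<Rightarrow> complex) \<Rightarrow> bool" where
  "lin_functional \<phi> \<longleftrightarrow>
     (\<forall>f\<in>Hinf. \<forall>g\<in>Hinf. \<phi> (\<lambda>z. f z + g z) = \<phi> f + \<phi> g) \<and>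
     (\<forall>f\<in>Hinf. \<forall>a. \<phi> (\<lambda>z. a * f z) = a * \<phi> f)"

definition nuclear_on_Hinf :: "((complex \<Rightarrow> complex) \<Rightarrow> (complex \<Rightarrow> complex)) \<Rightarrow> bool" where
  "nuclear_on_Hinf T \<longleftrightarrow>
     (\<forall>f\<in>Hinf. T f \<in> Hinf) \<and>
     (\<exists>(\<phi> :: nat \<Rightarrow> (complex \<Rightarrow> complex) \<Rightarrow> complex) (g :: nat \<Rightarrow> complex \<Rightarrow> complex) (c :: nat \<Rightarrow> real).
        (\<forall>n. g n \<in> Hinf) \<and>
        (\<forall>n. lin_functional (\<phi> n)) \<and>
        (\<forall>n. c n \<ge> 0 \<and> (\<forall>f\<in>Hinf. cmod (\<phi> n f) \<le> c n * hnorm f)) \<and>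
        summable (\<lambda>n. c n * hnorm (g n)) \<and>
        (\<forall>f\<in>Hinf. \<forall>z. T f z = (\<Sum>n. \<phi> n f * g n z)))"

end

theory Submission
  imports Defs "HOL-Complex_Analysis.Complex_Analysis" "HOL-Library.Nat_Bijection"
begin

lemma DD_char: "z \<in> DD \<longleftrightarrow> (Re z)^2 + (Im z)^2 < Re z"
proof -
  have "z \<in> DD \<longleftrightarrow> cmod (z - 1/2) < 1/2"
    by (simp add: DD_def dist_norm norm_minus_commute)
  also have "\<dots> \<longleftrightarrow> (cmod (z - 1/2))^2 < (1/2)^2"
    using power_mono_iff[of "1/2" "cmod (z - 1/2)" 2] by (auto simp del: power_mono_iff simp add: not_le[symmetric])
  also have "(cmod (z - 1/2))^2 = (Re z - 1/2)^2 + (Im z)^2"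
    unfolding cmod_power2 by simp
  also have "(Re z - 1/2)^2 + (Im z)^2 < (1/2)^2 \<longleftrightarrow> (Re z)^2 + (Im z)^2 < Re z"
    by (auto simp: power2_eq_square algebra_simps)
  finally show ?thesis .
qed
lemma DD_props:
  assumes "z \<in> DD"
  shows "0 < Re z" "Re z < 1" "(cmod z)^2 < Re z" "cmod z < 1"
proof -
  have h: "(Re z)^2 + (Im z)^2 < Re z" using assms DD_char by blast
  show x0: "0 < Re z" using h zero_le_power2[of "Re z"] zero_le_power2[of "Im z"] by linarith
  have "(Re z)^2 < Re z" using h zero_le_power2[of "Im z"] by linarith
  hence "Re z * Re z < Re z * 1" by (simp add: power2_eq_square)
  then show "Re z < 1" using x0 by (simp add: mult_less_cancel_left)
  show c: "(cmod z)^2 < Re z" using h by (simp add: cmod_power2)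
  have "(cmod z)^2 < 1" using c \<open>Re z < 1\<close> by linarith
  then show "cmod z < 1" by (simp add: power_less_one_iff abs_square_less_1)
qed

lemma half_in_DD: "1/2 \<in> DD" by (simp add: DD_def)

lemma DD_ne: "DD \<noteq> {}" using half_in_DD by blast

lemma open_DD: "open DD" by (simp add: DD_def)

lemma one_minus_DD: "z \<in> DD \<Longrightarrow> 1 - z \<in> DD"
  by (simp add: DD_char power2_eq_square algebra_simps)

lemma inv_DD:
  assumes "z \<in> DD" "1 \<le> m"
  shows "1 / (of_real m + z) \<in> DD"
proof -
  define w where "w = of_real m + z"
  have rw: "Re w = m + Re z" "Im w = Im z" by (simp_all add: w_def)
  have pos: "0 < Re w" using DD_props(1)[OF assms(1)] assms(2) rw by linarith
  hence nz: "(Re w)^2 + (Im w)^2 > 0" by (simp add: sum_power2_gt_zero_iff)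
  have "Re (1/w) = Re w / ((Re w)^2 + (Im w)^2)" "Im (1/w) = - Im w / ((Re w)^2 + (Im w)^2)"
    by (simp_all add: Re_divide Im_divide power2_eq_square)
  moreover have "(Re w / ((Re w)^2 + (Im w)^2))^2 + (- Im w / ((Re w)^2 + (Im w)^2))^2
      = ((Re w)^2 + (Im w)^2) / ((Re w)^2 + (Im w)^2)^2"
    by (simp add: power_divide add_divide_distrib)
  moreover have "((Re w)^2 + (Im w)^2) / ((Re w)^2 + (Im w)^2)^2 = 1 / ((Re w)^2 + (Im w)^2)"
    using nz by (simp add: power2_eq_square)
  ultimately have "(Re (1/w))^2 + (Im (1/w))^2 = 1 / ((Re w)^2 + (Im w)^2)" by simp
  also have "\<dots> < Re (1/w)"
    using nz \<open>Re (1/w) = _\<close> rw DD_props(1)[OF assms(1)] assms(2)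
    by (simp add: divide_strict_right_mono)
  finally show ?thesis unfolding w_def[symmetric] by (simp add: DD_char)
qed

lemma norm_plus_ge:
  assumes "z \<in> DD" "0 \<le> m"
  shows "m \<le> cmod (of_real m + z)"
proof -
  have "Re (of_real m + z) \<le> cmod (of_real m + z)" by (rule complex_Re_le_cmod)
  thus ?thesis using DD_props(1)[OF assms(1)] by simp
qed

lemma re_inv_one_plus:
  assumes "z \<in> DD"
  shows "1/2 < Re (1 / (1 + z))"
proof -
  define w where "w = 1 + z"
  have rw: "Re w = 1 + Re z" "Im w = Im z" by (simp_all add: w_def)
  have h: "(Re z)^2 + (Im z)^2 < Re z" "Re z < 1" "0 < Re z"
    using assms DD_char DD_props by blast+
  have nz: "(Re w)^2 + (Im w)^2 > 0" using rw h zero_le_power2[of "Im z"] zero_le_power2[of "1 + Re z"] by (simp add: add_pos_nonneg)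
  have "Re (1/w) = Re w / ((Re w)^2 + (Im w)^2)"
    by (simp add: Re_divide power2_eq_square)
  moreover have "(Re w)^2 + (Im w)^2 < 2 * Re w"
    using rw h by (simp add: power2_eq_square algebra_simps)
  ultimately have "1/2 < Re (1/w)" using nz by (simp add: less_divide_eq)
  thus ?thesis unfolding w_def .
qed

lemma inv_dist_center:
  assumes "z \<in> DD" "1 \<le> m"
  shows "cmod (1 / (of_nat m + z) - 1 / of_nat m) \<le> 1 / (of_nat m)^2"
proof -
  have mz: "real m \<le> cmod (of_nat m + z)" using norm_plus_ge[OF assms(1), of "real m"] by simp
  have m0: "real m > 0" using assms by simp
  hence nz: "of_nat m + z \<noteq> 0" using mz by auto
  have "1 / (of_nat m + z) - 1 / of_nat m = - z / ((of_nat m + z) * of_nat m)"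
    using nz m0 by (simp add: field_simps)
  hence "cmod (1 / (of_nat m + z) - 1 / of_nat m) = cmod z / (cmod (of_nat m + z) * real m)"
    by (simp add: norm_divide norm_mult)
  also have "\<dots> \<le> 1 / (real m * real m)"
    using DD_props(4)[OF assms(1)] mz m0
    by (intro frac_le) (auto intro: mult_right_mono)
  finally show ?thesis by (simp add: power2_eq_square)
qed


lemma Hinf_bdd:
  assumes "f \<in> Hinf"
  shows "bdd_above ((\<lambda>z. cmod (f z)) ` DD)"
proof -
  have "bounded (f ` DD)" using assms by (simp add: Hinf_def)
  then obtain a where "\<forall>x\<in>f ` DD. norm x \<le> a" by (auto simp: bounded_iff)
  thus ?thesis by (auto simp: bdd_above_def)
qed

lemma hnorm_ge:
  assumes "f \<in> Hinf"
  shows "cmod (f z) \<le> hnorm f"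
proof (cases "z \<in> DD")
  case True
  show ?thesis unfolding hnorm_def by (rule cSUP_upper[OF True Hinf_bdd[OF assms]])
next
  case False
  hence "f z = 0" using assms by (simp add: Hinf_def)
  moreover have "cmod (f (1/2)) \<le> hnorm f"
    unfolding hnorm_def by (rule cSUP_upper[OF half_in_DD Hinf_bdd[OF assms]])
  ultimately show ?thesis using norm_ge_zero[of "f (1/2)"] by (simp del: norm_ge_zero)
qed

lemma hnorm_nonneg: "f \<in> Hinf \<Longrightarrow> 0 \<le> hnorm f"
  using hnorm_ge[of f "1/2"] norm_ge_zero[of "f (1/2)"] by linarith

lemma hnorm_le:
  assumes "\<And>z. z \<in> DD \<Longrightarrow> cmod (f z) \<le> M"
  shows "hnorm f \<le> M"
  unfolding hnorm_def using DD_ne assms by (rule cSUP_least)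

lemma HinfI:
  assumes "f holomorphic_on DD" "\<And>z. z \<in> DD \<Longrightarrow> cmod (f z) \<le> M" "\<And>z. z \<notin> DD \<Longrightarrow> f z = 0"
  shows "f \<in> Hinf"
proof -
  have "bounded (f ` DD)" using assms(2) by (auto simp: bounded_iff)
  thus ?thesis using assms by (auto simp: Hinf_def)
qed

lemma Hinf_hol: "f \<in> Hinf \<Longrightarrow> f holomorphic_on DD" by (simp add: Hinf_def)
lemma Hinf_zero: "f \<in> Hinf \<Longrightarrow> z \<notin> DD \<Longrightarrow> f z = 0" by (simp add: Hinf_def)

lemma comp_hol:
  assumes "g holomorphic_on DD" "\<phi> holomorphic_on DD" "\<And>z. z \<in> DD \<Longrightarrow> \<phi> z \<in> DD"
  shows "(\<lambda>z. g (\<phi> z)) holomorphic_on DD"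
  using holomorphic_on_compose_gen[OF assms(2) assms(1)] assms(3) by (auto simp: o_def)

lemma psi1_DD: "z \<in> DD \<Longrightarrow> 1 / (1 + z) \<in> DD"
  using inv_DD[of z 1] by simp

lemma psi2_DD: "z \<in> DD \<Longrightarrow> 1 - 1 / (1 + z) \<in> DD"
  using one_minus_DD psi1_DD by blast

lemma one_plus_ge: "z \<in> DD \<Longrightarrow> 1 \<le> cmod (1 + z)"
  using norm_plus_ge[of z 1] by simp

lemma one_plus_nz: "z \<in> DD \<Longrightarrow> 1 + z \<noteq> 0"
  using one_plus_ge[of z] by auto

lemma B_expand:
  "z \<in> DD \<Longrightarrow> B_op p g z = of_real p / (1 + z)^2 * g (1 / (1 + z))
      + of_real (1 - p) / (1 + z)^2 * g (1 - 1 / (1 + z))"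
  by (simp add: B_op_def branch_term_def)

lemma B_out: "z \<notin> DD \<Longrightarrow> B_op p g z = 0"
  by (simp add: B_op_def)

lemma norm_lin2:
  "cmod (a * u + b * v) \<le> cmod a * cmod u + cmod b * cmod v"
  by (metis norm_mult norm_triangle_ineq)

lemma B_norm:
  assumes "0 \<le> p" "p \<le> 1" "z \<in> DD"
  shows "cmod (B_op p g z) \<le> (p * cmod (g (1 / (1 + z))) + (1 - p) * cmod (g (1 - 1 / (1 + z)))) / (cmod (1 + z))^2"
proof -
  have "cmod (B_op p g z) \<le> cmod (of_real p / (1 + z)^2) * cmod (g (1 / (1 + z)))
      + cmod (of_real (1 - p) / (1 + z)^2) * cmod (g (1 - 1 / (1 + z)))"
    unfolding B_expand[OF assms(3)] by (rule norm_lin2)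
  also have "\<dots> = (p * cmod (g (1 / (1 + z))) + (1 - p) * cmod (g (1 - 1 / (1 + z)))) / (cmod (1 + z))^2"
  proof -
    have n1: "cmod (complex_of_real p / (1 + z)^2) = p / (cmod (1 + z))^2"
      by (simp only: norm_divide norm_power norm_of_real) (use assms in simp)
    have n2: "cmod (complex_of_real (1 - p) / (1 + z)^2) = (1 - p) / (cmod (1 + z))^2"
      by (simp only: norm_divide norm_power norm_of_real) (use assms in simp)
    show ?thesis unfolding n1 n2 by (simp add: add_divide_distrib)
  qed
  finally show ?thesis .
qed

lemma B_bound1:
  assumes "0 \<le> p" "p \<le> 1" "z \<in> DD" "\<And>w. w \<in> DD \<Longrightarrow> cmod (g w) \<le> M"
  shows "cmod (B_op p g z) \<le> M / (cmod (1 + z))^2"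
proof -
  have a: "cmod (g (1 / (1 + z))) \<le> M" "cmod (g (1 - 1 / (1 + z))) \<le> M"
    using assms(4) psi1_DD psi2_DD assms(3) by auto
  have "p * cmod (g (1 / (1 + z))) + (1 - p) * cmod (g (1 - 1 / (1 + z))) \<le> p * M + (1 - p) * M"
    using a assms(1,2) by (intro add_mono mult_left_mono) auto
  hence "(p * cmod (g (1 / (1 + z))) + (1 - p) * cmod (g (1 - 1 / (1 + z)))) / (cmod (1 + z))^2
        \<le> M / (cmod (1 + z))^2"
    by (simp add: divide_right_mono algebra_simps)
  thus ?thesis using B_norm[OF assms(1-3), of g] by linarith
qed

lemma B_bound0:
  assumes "0 \<le> p" "p \<le> 1" "0 \<le> M" "\<And>w. w \<in> DD \<Longrightarrow> cmod (g w) \<le> M"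
  shows "cmod (B_op p g z) \<le> M"
proof (cases "z \<in> DD")
  case True
  have "1 \<le> (cmod (1 + z))^2" using one_plus_ge[OF True] by (simp add: one_le_power)
  hence "M / (cmod (1 + z))^2 \<le> M / 1" using assms(3) by (intro divide_left_mono) auto
  thus ?thesis using B_bound1[where g=g and M=M, OF assms(1,2) True assms(4)] by linarith
next
  case False thus ?thesis using assms(3) by (simp add: B_out)
qed

lemma B_bound2:
  assumes "0 \<le> p" "p \<le> 1" "0 \<le> M" "\<And>w. w \<in> DD \<Longrightarrow> cmod (g w) \<le> M"
  shows "cmod (B_op p (B_op p g) z) \<le> (1 - 5 * p / 9) * M"
proof (cases "z \<in> DD")
  case True
  define u where "u = 1 / (1 + z)"
  have uD: "u \<in> DD" and vD: "1 - u \<in> DD" using psi1_DD psi2_DD True by (auto simp: u_def)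
  have "3/2 \<le> cmod (1 + u)"
  proof -
    have "Re (1 + u) \<le> cmod (1 + u)" by (rule complex_Re_le_cmod)
    moreover have "1/2 < Re u" using re_inv_one_plus[OF True] by (simp add: u_def)
    ultimately show ?thesis by simp
  qed
  hence "(3/2)^2 \<le> (cmod (1 + u))^2" by (intro power_mono) auto
  hence u2: "9/4 \<le> (cmod (1 + u))^2" by (simp add: power2_eq_square)
  have b1: "cmod (B_op p g u) \<le> M * (4/9)"
  proof -
    have "cmod (B_op p g u) \<le> M / (cmod (1 + u))^2" by (rule B_bound1[where g=g and M=M, OF assms(1,2) uD assms(4)])
    also have "\<dots> \<le> M / (9/4)" using u2 assms(3) by (intro divide_left_mono) auto
    finally show ?thesis by simp
  qed
  have b2: "cmod (B_op p g (1 - u)) \<le> M" by (rule B_bound0[OF assms])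
  have "cmod (B_op p (B_op p g) z) \<le> (p * cmod (B_op p g u) + (1 - p) * cmod (B_op p g (1 - u))) / (cmod (1 + z))^2"
    using B_norm[OF assms(1,2) True] unfolding u_def .
  also have "\<dots> \<le> p * cmod (B_op p g u) + (1 - p) * cmod (B_op p g (1 - u))"
  proof -
    have "1 \<le> (cmod (1 + z))^2" using one_plus_ge[OF True] by (simp add: one_le_power)
    moreover have "0 \<le> p * cmod (B_op p g u) + (1 - p) * cmod (B_op p g (1 - u))"
      using assms(1,2) by simp
    ultimately have "(p * cmod (B_op p g u) + (1 - p) * cmod (B_op p g (1 - u))) / (cmod (1 + z))^2
       \<le> (p * cmod (B_op p g u) + (1 - p) * cmod (B_op p g (1 - u))) / 1"
      by (intro divide_left_mono) auto
    thus ?thesis by simp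
  qed
  also have "\<dots> \<le> p * (M * (4/9)) + (1 - p) * M"
    using b1 b2 assms(1,2) by (intro add_mono mult_left_mono) auto
  also have "\<dots> = (1 - 5 * p / 9) * M" by (simp add: algebra_simps)
  finally show ?thesis .
next
  case False
  have "0 \<le> (1 - 5 * p / 9) * M" using assms by simp
  thus ?thesis using False by (simp add: B_out)
qed

lemma B_Hinf:
  assumes "0 \<le> p" "p \<le> 1" "g \<in> Hinf"
  shows "B_op p g \<in> Hinf"
proof (rule HinfI)
  let ?h = "\<lambda>z. of_real p / (1 + z)^2 * g (1 / (1 + z)) + of_real (1 - p) / (1 + z)^2 * g (1 - 1 / (1 + z))"
  have gh: "g holomorphic_on DD" using assms(3) by (rule Hinf_hol)
  have h1: "(\<lambda>z. 1 / (1 + z)) holomorphic_on DD"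
    using one_plus_nz by (auto intro!: holomorphic_intros)
  have h2: "(\<lambda>z. 1 - 1 / (1 + z)) holomorphic_on DD"
    using one_plus_nz by (auto intro!: holomorphic_intros)
  have "?h holomorphic_on DD"
    using one_plus_nz comp_hol[OF gh h1 psi1_DD] comp_hol[OF gh h2 psi2_DD]
    by (auto intro!: holomorphic_intros)
  thus "B_op p g holomorphic_on DD"
    by (rule holomorphic_transform) (simp add: B_expand)
  show "\<And>z. z \<in> DD \<Longrightarrow> cmod (B_op p g z) \<le> hnorm g"
    using B_bound0[OF assms(1,2) hnorm_nonneg[OF assms(3)]] hnorm_ge[OF assms(3)] by blast
  show "\<And>z. z \<notin> DD \<Longrightarrow> B_op p g z = 0" by (rule B_out)
qed

lemma B_diff: "B_op p (\<lambda>z. g z - h z) = (\<lambda>z. B_op p g z - B_op p h z)"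
  by (rule ext) (simp add: B_op_def branch_term_def algebra_simps)

lemma B_suminf:
  assumes "\<And>w. summable (\<lambda>k. h k w)"
  shows "B_op p (\<lambda>z. \<Sum>k. h k z) z = (\<Sum>k. B_op p (h k) z)"
proof (cases "z \<in> DD")
  case True
  let ?a = "of_real p / (1 + z)^2" and ?b = "of_real (1 - p) / (1 + z)^2"
  have "B_op p (\<lambda>z. \<Sum>k. h k z) z = ?a * (\<Sum>k. h k (1 / (1 + z))) + ?b * (\<Sum>k. h k (1 - 1 / (1 + z)))"
    using True by (simp add: B_expand)
  also have "\<dots> = (\<Sum>k. ?a * h k (1 / (1 + z))) + (\<Sum>k. ?b * h k (1 - 1 / (1 + z)))"
    by (simp only: suminf_mult[OF assms])
  also have "\<dots> = (\<Sum>k. ?a * h k (1 / (1 + z)) + ?b * h k (1 - 1 / (1 + z)))"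
    using assms by (intro suminf_add summable_mult)
  also have "\<dots> = (\<Sum>k. B_op p (h k) z)" using True by (simp add: B_expand)
  finally show ?thesis .
next
  case False thus ?thesis by (simp add: B_out)
qed


lemma series_pt:
  fixes h :: "nat \<Rightarrow> complex \<Rightarrow> complex"
  assumes "\<And>k z. cmod (h k z) \<le> M k" "summable M"
  shows "summable (\<lambda>k. h k w)" "summable (\<lambda>k. cmod (h k w))" "cmod (\<Sum>k. h k w) \<le> (\<Sum>k. M k)"
proof -
  show s1: "summable (\<lambda>k. cmod (h k w))"
    by (rule summable_comparison_test[OF _ assms(2)]) (use assms(1) in auto)
  show "summable (\<lambda>k. h k w)"
    by (rule summable_comparison_test[OF _ assms(2)]) (use assms(1) in auto)
  have "cmod (\<Sum>k. h k w) \<le> (\<Sum>k. cmod (h k w))" by (rule summable_norm[OF s1])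
  also have "\<dots> \<le> (\<Sum>k. M k)" by (rule suminf_le[OF _ s1 assms(2)]) (use assms(1) in auto)
  finally show "cmod (\<Sum>k. h k w) \<le> (\<Sum>k. M k)" .
qed

lemma hinf_series:
  fixes h :: "nat \<Rightarrow> complex \<Rightarrow> complex"
  assumes hH: "\<And>k. h k \<in> Hinf" and hM: "\<And>k z. cmod (h k z) \<le> M k" and sM: "summable M"
  shows "(\<lambda>z. \<Sum>k. h k z) \<in> Hinf" "hnorm (\<lambda>z. \<Sum>k. h k z) \<le> (\<Sum>k. M k)"
proof -
  have hol: "(\<lambda>z. \<Sum>k. h k z) holomorphic_on DD"
  proof (rule holomorphic_uniform_sequence[OF open_DD])
    show "\<And>n. (\<lambda>z. \<Sum>i<n. h i z) holomorphic_on DD"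
      using hH by (intro holomorphic_on_sum) (auto simp: Hinf_def)
    fix x assume "x \<in> DD"
    then obtain d where d: "0 < d" "cball x d \<subseteq> DD" using open_DD open_contains_cball by blast
    have "uniform_limit (cball x d) (\<lambda>n z. \<Sum>i<n. h i z) (\<lambda>z. \<Sum>k. h k z) sequentially"
      by (rule Weierstrass_m_test[OF _ sM]) (use hM in auto)
    thus "\<exists>d>0. cball x d \<subseteq> DD \<and> uniform_limit (cball x d) (\<lambda>n z. \<Sum>i<n. h i z) (\<lambda>z. \<Sum>k. h k z) sequentially"
      using d by blast
  qed
  have bd: "\<And>z. cmod (\<Sum>k. h k z) \<le> (\<Sum>k. M k)" using series_pt(3)[where h=h and M=M, OF hM sM] by blast
  show "(\<lambda>z. \<Sum>k. h k z) \<in> Hinf"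
  proof (rule HinfI[OF hol])
    show "\<And>z. z \<in> DD \<Longrightarrow> cmod (\<Sum>k. h k z) \<le> (\<Sum>k. M k)" using bd by blast
    show "\<And>z. z \<notin> DD \<Longrightarrow> (\<Sum>k. h k z) = 0" using hH by (simp add: Hinf_zero)
  qed
  show "hnorm (\<lambda>z. \<Sum>k. h k z) \<le> (\<Sum>k. M k)" by (rule hnorm_le) (use bd in blast)
qed

lemma Bk_Hinf: "0 \<le> p \<Longrightarrow> p \<le> 1 \<Longrightarrow> f \<in> Hinf \<Longrightarrow> (B_op p ^^ k) f \<in> Hinf"
  by (induction k) (auto intro: B_Hinf)

lemma Bk_bound:
  assumes p: "0 \<le> p" "p \<le> 1" and M: "0 \<le> M" "\<And>z. cmod (g z) \<le> M"
  defines "s \<equiv> sqrt (1 - 5 * p / 9)"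
  shows "cmod ((B_op p ^^ k) g z) \<le> s ^ k * (M / s)"
proof -
  have s0: "0 < s" and s1: "s \<le> 1" using p by (auto simp: s_def)
  have s2: "s ^ 2 = 1 - 5 * p / 9" using p unfolding s_def by (simp add: real_sqrt_pow2)
  have Mb: "0 \<le> s ^ k * (M / s)" for k using s0 M by simp
  show ?thesis
  proof (induction k arbitrary: z rule: less_induct)
    case (less k)
    show ?case
    proof (cases k)
      case 0
      have "M \<le> M / s" using s0 s1 M(1) by (simp add: le_divide_eq mult_left_le)
      thus ?thesis using M(2)[of z] 0 by simp
    next
      case (Suc j)
      show ?thesis
      proof (cases j)
        case 0
        have "cmod (B_op p g z) \<le> M" by (rule B_bound0[OF p M(1)]) (use M(2) in blast)
        thus ?thesis using Suc 0 s0 by simp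
      next
        case (Suc i)
        have IH: "\<And>w. cmod ((B_op p ^^ i) g w) \<le> s ^ i * (M / s)"
          using less.IH[of i] \<open>k = Suc j\<close> Suc by simp
        have "cmod (B_op p (B_op p ((B_op p ^^ i) g)) z) \<le> (1 - 5 * p / 9) * (s ^ i * (M / s))"
          by (rule B_bound2[OF p Mb]) (use IH in blast)
        also have "\<dots> = s ^ k * (M / s)" using \<open>k = Suc j\<close> Suc by (simp add: s2[symmetric] power2_eq_square)
        finally show ?thesis using \<open>k = Suc j\<close> Suc by simp
      qed
    qed
  qed
qed

lemma Bk_diff: "(B_op p ^^ k) (\<lambda>z. f z - B_op p f z) = (\<lambda>z. (B_op p ^^ k) f z - (B_op p ^^ Suc k) f z)"
proof (induction k)
  case 0 thus ?case by simp
next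
  case (Suc k)
  have "(B_op p ^^ Suc k) (\<lambda>z. f z - B_op p f z) = B_op p ((B_op p ^^ k) (\<lambda>z. f z - B_op p f z))" by simp
  also have "\<dots> = B_op p (\<lambda>z. (B_op p ^^ k) f z - (B_op p ^^ Suc k) f z)" using Suc by simp
  also have "\<dots> = (\<lambda>z. B_op p ((B_op p ^^ k) f) z - B_op p ((B_op p ^^ Suc k) f) z)" by (rule B_diff)
  also have "\<dots> = (\<lambda>z. (B_op p ^^ Suc k) f z - (B_op p ^^ Suc (Suc k)) f z)" by simp
  finally show ?case .
qed

lemma J_part:
  assumes p: "0 < p" "p < 1"
  shows "\<exists>J. (\<forall>f\<in>Hinf. J f \<in> Hinf)
              \<and> (\<forall>f\<in>Hinf. (\<lambda>z. J f z - B_op p (J f) z) = f)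
              \<and> (\<forall>f\<in>Hinf. J (\<lambda>z. f z - B_op p f z) = f)
              \<and> (\<exists>C. \<forall>f\<in>Hinf. hnorm (J f) \<le> C * hnorm f)"
proof -
  have p': "0 \<le> p" "p \<le> 1" using p by auto
  define s where "s = sqrt (1 - 5 * p / 9)"
  have s0: "0 < s" and s1: "s < 1" using p by (auto simp: s_def)
  define J where "J = (\<lambda>f z. \<Sum>k. (B_op p ^^ k) f z)"
  have bnd: "\<And>k z. cmod ((B_op p ^^ k) f z) \<le> s ^ k * (hnorm f / s)" if "f \<in> Hinf" for f
    unfolding s_def by (rule Bk_bound[OF p' hnorm_nonneg[OF that] hnorm_ge[OF that]])
  have sg: "summable (\<lambda>k. s ^ k * c)" for c
    by (rule summable_mult2, rule summable_geometric) (use s0 s1 in simp)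
  have sumg: "(\<Sum>k. s ^ k * c) = c * (1 / (s * (1 - s))) * s" for c
  proof -
    have "(\<Sum>k. s ^ k * c) = (\<Sum>k. s ^ k) * c" by (rule suminf_mult2[symmetric]) (rule summable_geometric, use s0 s1 in simp)
    also have "\<dots> = c / (1 - s)" by (subst suminf_geometric) (use s0 s1 in auto)
    also have "\<dots> = c * (1 / (s * (1 - s))) * s" using s0 s1 by (simp add: field_simps)
    finally show ?thesis .
  qed
  have JH: "J f \<in> Hinf" if "f \<in> Hinf" for f
    unfolding J_def by (rule hinf_series(1)[OF Bk_Hinf[OF p' that] bnd[OF that] sg])
  have summ: "summable (\<lambda>k. (B_op p ^^ k) f z)" if "f \<in> Hinf" for f z
    by (rule series_pt(1)[OF bnd[OF that] sg])
  have JB: "(\<lambda>z. J f z - B_op p (J f) z) = f" if fH: "f \<in> Hinf" for f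
  proof
    fix z
    have "B_op p (J f) z = (\<Sum>k. B_op p ((B_op p ^^ k) f) z)"
      unfolding J_def by (rule B_suminf) (rule summ[OF fH])
    also have "\<dots> = (\<Sum>k. (B_op p ^^ Suc k) f z)" by simp
    also have "\<dots> = J f z - f z" unfolding J_def using suminf_split_head[OF summ[OF fH, of z]] by simp
    finally show "J f z - B_op p (J f) z = f z" by simp
  qed
  have BJ: "J (\<lambda>z. f z - B_op p f z) = f" if fH: "f \<in> Hinf" for f
  proof
    fix z
    have "J (\<lambda>z. f z - B_op p f z) z = (\<Sum>k. (B_op p ^^ k) f z - (B_op p ^^ Suc k) f z)"
      unfolding J_def Bk_diff by simp
    also have "\<dots> = (B_op p ^^ 0) f z - 0"
      by (rule sums_unique[symmetric], rule telescope_sums') (rule summable_LIMSEQ_zero[OF summ[OF fH]])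
    finally show "J (\<lambda>z. f z - B_op p f z) z = f z" by simp
  qed
  have Jn: "hnorm (J f) \<le> (1 / (s * (1 - s))) * hnorm f" if fH: "f \<in> Hinf" for f
  proof -
    have "hnorm (J f) \<le> (\<Sum>k. s ^ k * (hnorm f / s))"
      unfolding J_def by (rule hinf_series(2)[OF Bk_Hinf[OF p' fH] bnd[OF fH] sg])
    also have "\<dots> = hnorm f / s * (1 / (s * (1 - s))) * s" by (rule sumg)
    also have "\<dots> = (1 / (s * (1 - s))) * hnorm f" using s0 s1 by (simp add: field_simps)
    finally show ?thesis .
  qed
  show ?thesis
    by (rule exI[of _ J]) (use JH JB BJ Jn in blast)
qed


definition mm :: "nat \<Rightarrow> nat" where "mm n = n div 2 + 2"
definition cc :: "nat \<Rightarrow> complex" where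
  "cc n = (if even n then 1 / of_nat (mm n) else 1 - 1 / of_nat (mm n))"
definition rr :: "nat \<Rightarrow> real" where "rr n = 3 / (4 * real (mm n))"
definition th :: "nat \<Rightarrow> complex \<Rightarrow> complex" where
  "th n z = (if even n then 1 / (of_nat (mm n) + z) else 1 - 1 / (of_nat (mm n) + z))"
definition ww :: "real \<Rightarrow> nat \<Rightarrow> complex" where
  "ww p n = (if even n then of_real p else of_real (1 - p))"
definition Phi :: "nat \<Rightarrow> nat \<Rightarrow> (complex \<Rightarrow> complex) \<Rightarrow> complex" where
  "Phi n k f = (deriv ^^ k) f (cc n) / fact k * of_real (rr n) ^ k"
definition GG :: "real \<Rightarrow> nat \<Rightarrow> nat \<Rightarrow> complex \<Rightarrow> complex" where
  "GG p n k z = (if z \<in> DD then ww p n * ((th n z - cc n) / of_real (rr n)) ^ k / (of_nat (mm n) + z)^2 else 0)"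

lemma mm_ge: "2 \<le> mm n" by (simp add: mm_def)

lemma mm_pos: "0 < real (mm n)" using mm_ge[of n] by simp

lemma rr_pos: "0 < rr n" using mm_pos[of n] by (simp add: rr_def)

lemma th_cc:
  assumes "z \<in> DD"
  shows "cmod (th n z - cc n) \<le> 1 / (real (mm n))^2"
proof -
  have m1: "1 \<le> mm n" using mm_ge[of n] by simp
  have *: "cmod (1 / (of_nat (mm n) + z) - 1 / of_nat (mm n)) \<le> 1 / (real (mm n))^2"
    using inv_dist_center[OF assms m1] by simp
  show ?thesis
  proof (cases "even n")
    case True thus ?thesis using * by (simp add: th_def cc_def)
  next
    case False
    have "th n z - cc n = - (1 / (of_nat (mm n) + z) - 1 / of_nat (mm n))"
      using False by (simp add: th_def cc_def)
    thus ?thesis using * by (simp only: norm_minus_cancel)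
  qed
qed

lemma mz_ge:
  assumes "z \<in> DD"
  shows "real (mm n) \<le> cmod (of_nat (mm n) + z)"
  using norm_plus_ge[OF assms, of "real (mm n)"] by simp

lemma mz_nz:
  assumes "z \<in> DD"
  shows "of_nat (mm n) + z \<noteq> 0"
  using mz_ge[OF assms, of n] mm_pos[of n] by auto

lemma cc_half: "cmod (cc n - 1/2) = 1/2 - 1 / real (mm n)"
proof -
  have m2: "1 / real (mm n) \<le> 1/2" using mm_ge[of n] by (simp add: divide_simps)
  have e: "cc n - 1/2 = complex_of_real (if even n then 1 / real (mm n) - 1/2 else 1/2 - 1 / real (mm n))"
    by (simp add: cc_def)
  show ?thesis unfolding e norm_of_real using m2 by auto
qed

lemma cc_cball: "cball (cc n) (rr n) \<subseteq> DD"
proof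
  fix w assume "w \<in> cball (cc n) (rr n)"
  hence w: "cmod (w - cc n) \<le> 3 / (4 * real (mm n))" by (simp add: rr_def dist_norm norm_minus_commute)
  have "cmod (w - 1/2) \<le> cmod (w - cc n) + cmod (cc n - 1/2)"
    by (metis diff_add_cancel norm_triangle_ineq add_diff_eq)
  also have "\<dots> \<le> 3 / (4 * real (mm n)) + (1/2 - 1 / real (mm n))" using w cc_half[of n] by simp
  also have "\<dots> < 1/2" using mm_pos[of n] by (simp add: field_simps)
  finally show "w \<in> DD" by (simp add: DD_def dist_norm norm_minus_commute)
qed

lemma cc_DD: "cc n \<in> DD" using cc_cball[of n] rr_pos[of n] by auto

lemma th_ball:
  assumes "z \<in> DD"
  shows "th n z \<in> ball (cc n) (rr n)"
proof -
  have "1 / (real (mm n))^2 < 3 / (4 * real (mm n))"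
    using mm_ge[of n] by (simp add: field_simps power2_eq_square)
  moreover have "dist (cc n) (th n z) = cmod (th n z - cc n)" by (simp add: dist_norm norm_minus_commute)
  ultimately have "dist (cc n) (th n z) < rr n" using th_cc[OF assms, of n] unfolding rr_def by linarith
  thus ?thesis by simp
qed

lemma ratio_bound:
  assumes "z \<in> DD"
  shows "cmod ((th n z - cc n) / of_real (rr n)) \<le> 2/3"
proof -
  have "cmod ((th n z - cc n) / of_real (rr n)) = cmod (th n z - cc n) / rr n"
    using rr_pos[of n] by (simp add: norm_divide)
  also have "\<dots> \<le> (1 / (real (mm n))^2) / rr n"
    by (rule divide_right_mono) (use th_cc[OF assms, of n] rr_pos[of n] in auto)
  also have "\<dots> = 4 / (3 * real (mm n))" using mm_pos[of n] by (simp add: rr_def field_simps power2_eq_square)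
  also have "\<dots> \<le> 2/3" using mm_ge[of n] by (simp add: field_simps)
  finally show ?thesis .
qed

lemma ww_norm: "0 \<le> p \<Longrightarrow> p \<le> 1 \<Longrightarrow> cmod (ww p n) \<le> 1"
proof -
  assume "0 \<le> p" "p \<le> 1"
  moreover have "ww p n = of_real (if even n then p else 1 - p)" by (simp add: ww_def)
  ultimately show ?thesis by (simp only: norm_of_real) auto
qed

lemma GG_bound:
  assumes "0 \<le> p" "p \<le> 1"
  shows "cmod (GG p n k z) \<le> (2/3)^k / (real (mm n))^2"
proof (cases "z \<in> DD")
  case True
  have a: "cmod (((th n z - cc n) / of_real (rr n)) ^ k) \<le> (2/3)^k"
    unfolding norm_power by (rule power_mono[OF ratio_bound[OF True]]) simp
  have b: "(real (mm n))^2 \<le> cmod ((of_nat (mm n) + z)^2)"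
    unfolding norm_power by (rule power_mono[OF mz_ge[OF True]]) simp
  have "cmod (GG p n k z) = cmod (ww p n) * cmod (((th n z - cc n) / of_real (rr n)) ^ k) / cmod ((of_nat (mm n) + z)^2)"
    using True by (simp add: GG_def norm_mult norm_divide)
  also have "\<dots> \<le> 1 * (2/3)^k / (real (mm n))^2"
    using a b ww_norm[OF assms, of n] mm_pos[of n]
    by (intro frac_le mult_mono) auto
  finally show ?thesis by simp
qed (simp add: GG_def)

lemma GG_Hinf:
  assumes "0 \<le> p" "p \<le> 1"
  shows "GG p n k \<in> Hinf"
proof (rule HinfI)
  have "(\<lambda>z. ww p n * ((th n z - cc n) / of_real (rr n)) ^ k / (of_nat (mm n) + z)^2) holomorphic_on DD"
    using mz_nz[of _ n] by (cases "even n") (auto simp: th_def intro!: holomorphic_intros)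
  thus "GG p n k holomorphic_on DD" by (rule holomorphic_transform) (simp add: GG_def)
  show "\<And>z. z \<in> DD \<Longrightarrow> cmod (GG p n k z) \<le> (2/3)^k / (real (mm n))^2" using GG_bound[OF assms] by blast
  show "\<And>z. z \<notin> DD \<Longrightarrow> GG p n k z = 0" by (simp add: GG_def)
qed

lemma hnorm_GG:
  assumes "0 \<le> p" "p \<le> 1"
  shows "hnorm (GG p n k) \<le> (2/3)^k / (real (mm n))^2"
  by (rule hnorm_le) (use GG_bound[OF assms] in blast)

lemma Phi_bound:
  assumes "f \<in> Hinf"
  shows "cmod (Phi n k f) \<le> hnorm f"
proof -
  have hol: "f holomorphic_on DD" using assms by (rule Hinf_hol)
  have "norm ((deriv ^^ k) f (cc n)) \<le> fact k * hnorm f / (rr n)^k"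
  proof (rule Cauchy_inequality)
    show "f holomorphic_on ball (cc n) (rr n)"
      using hol cc_cball[of n] ball_subset_cball by (blast intro: holomorphic_on_subset)
    show "continuous_on (cball (cc n) (rr n)) f"
      using hol cc_cball[of n] holomorphic_on_imp_continuous_on continuous_on_subset by blast
    show "0 < rr n" by (rule rr_pos)
    show "\<And>x. cmod (cc n - x) = rr n \<Longrightarrow> cmod (f x) \<le> hnorm f" using hnorm_ge[OF assms] by blast
  qed
  hence "norm ((deriv ^^ k) f (cc n)) / fact k * (rr n)^k \<le> hnorm f"
    using rr_pos[of n] by (simp add: field_simps)
  thus ?thesis using rr_pos[of n] by (simp add: Phi_def norm_mult norm_divide norm_power)
qed

lemma Phi_lin: "lin_functional (Phi n k)"
  unfolding lin_functional_def
proof (intro conjI ballI allI)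
  fix f g assume "f \<in> Hinf" "g \<in> Hinf"
  thus "Phi n k (\<lambda>z. f z + g z) = Phi n k f + Phi n k g"
    unfolding Phi_def
    by (subst higher_deriv_add[OF Hinf_hol Hinf_hol open_DD cc_DD]) (auto simp: field_simps)
next
  fix f a assume "f \<in> Hinf"
  thus "Phi n k (\<lambda>z. a * f z) = a * Phi n k f"
    unfolding Phi_def
    by (subst higher_deriv_cmult[OF Hinf_hol _ open_DD]) (auto simp: cc_DD)
qed

lemma taylor_piece:
  assumes "f \<in> Hinf" "z \<in> DD"
  shows "(\<lambda>k. Phi n k f * GG p n k z) sums (ww p n * f (th n z) / (of_nat (mm n) + z)^2)"
proof -
  have hol: "f holomorphic_on ball (cc n) (rr n)"
    using Hinf_hol[OF assms(1)] cc_cball[of n] ball_subset_cball by (blast intro: holomorphic_on_subset)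
  have s: "(\<lambda>k. (deriv ^^ k) f (cc n) / fact k * (th n z - cc n)^k) sums f (th n z)"
    by (rule holomorphic_power_series[OF hol th_ball[OF assms(2)]])
  have "(\<lambda>k. ww p n / (of_nat (mm n) + z)^2 * ((deriv ^^ k) f (cc n) / fact k * (th n z - cc n)^k))
        sums (ww p n / (of_nat (mm n) + z)^2 * f (th n z))"
    by (rule sums_mult[OF s])
  moreover have "Phi n k f * GG p n k z = ww p n / (of_nat (mm n) + z)^2 * ((deriv ^^ k) f (cc n) / fact k * (th n z - cc n)^k)" for k
  proof -
    have r0: "complex_of_real (rr n) \<noteq> 0" using rr_pos[of n] by simp
    have "of_real (rr n) ^ k * ((th n z - cc n) / of_real (rr n)) ^ k = (th n z - cc n) ^ k"
      using r0 by (simp add: power_divide)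
    moreover have "rr n \<noteq> 0" using rr_pos[of n] by simp
    ultimately show ?thesis using assms(2) by (simp add: Phi_def GG_def field_simps)
  qed
  ultimately show ?thesis by simp
qed


definition Bd0 :: "nat \<times> nat \<Rightarrow> real" where
  "Bd0 x = (2/3) ^ snd x / (real (mm (fst x)))^2"

lemma Bd0_nonneg: "0 \<le> Bd0 x" by (simp add: Bd0_def)

lemma summable_mm: "summable (\<lambda>n. 3 / (real (mm n))^2)"
proof (rule summable_comparison_test)
  have "summable (\<lambda>n. inverse (real n ^ 2))" by (rule inverse_power_summable) simp
  hence "summable (\<lambda>n. inverse (real (Suc n) ^ 2))" by (subst summable_Suc_iff)
  thus "summable (\<lambda>n. 12 * inverse (real (Suc n) ^ 2))" by (rule summable_mult)
  show "\<exists>N. \<forall>n\<ge>N. norm (3 / (real (mm n))^2) \<le> 12 * inverse (real (Suc n) ^ 2)"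
  proof (intro exI allI impI)
    fix n :: nat
    have "Suc n \<le> 2 * mm n" by (simp add: mm_def)
    hence "real (Suc n) \<le> 2 * real (mm n)" by linarith
    hence "(real (Suc n))^2 \<le> (2 * real (mm n))^2" by (intro power_mono) auto
    hence le: "(real (Suc n))^2 \<le> 4 * (real (mm n))^2" by (simp add: power_mult_distrib)
    have "3 / (real (mm n))^2 \<le> 12 / (real (Suc n))^2"
      using le mm_pos[of n] by (simp add: field_simps)
    thus "norm (3 / (real (mm n))^2) \<le> 12 * inverse (real (Suc n) ^ 2)"
      by (simp add: divide_inverse)
  qed
qed

lemma Bd0_summable: "Bd0 summable_on UNIV"
proof -
  have inner: "((\<lambda>k. Bd0 (n, k)) has_sum (3 / (real (mm n))^2)) UNIV" for n
  proof -
    have g: "(\<lambda>k. (2/3::real) ^ k) sums 3"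
      using geometric_sums[of "2/3::real"] by simp
    have s: "(\<lambda>k. Bd0 (n, k)) sums (3 / (real (mm n))^2)"
      unfolding Bd0_def using sums_divide[OF g] by simp
    show ?thesis
      by (rule norm_summable_imp_has_sum[OF _ s]) (use s in \<open>simp add: Bd0_nonneg sums_iff\<close>)
  qed
  have outer: "(\<lambda>n. 3 / (real (mm n))^2) summable_on UNIV"
    using summable_mm by (subst summable_on_UNIV_nonneg_real_iff) auto
  have "Bd0 summable_on Sigma UNIV (\<lambda>_. UNIV)"
    by (rule summable_on_SigmaI[OF inner outer]) (simp add: Bd0_nonneg)
  thus ?thesis by simp
qed

lemma Bd0_decode_summable: "summable (\<lambda>j. Bd0 (prod_decode j))"
proof -
  have "(\<lambda>j. Bd0 (prod_decode j)) summable_on UNIV"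
    using Bd0_summable summable_on_reindex_bij_betw[of prod_decode UNIV UNIV Bd0] bij_prod_decode
    by simp
  thus ?thesis by (subst (asm) summable_on_UNIV_nonneg_real_iff) (auto simp: Bd0_nonneg)
qed

lemma Hinf_cmult: "g \<in> Hinf \<Longrightarrow> (\<lambda>z. a * g z) \<in> Hinf"
proof (rule HinfI)
  assume g: "g \<in> Hinf"
  show "(\<lambda>z. a * g z) holomorphic_on DD" using Hinf_hol[OF g] by (auto intro!: holomorphic_intros)
  show "\<And>z. z \<in> DD \<Longrightarrow> cmod (a * g z) \<le> cmod a * hnorm g"
    using hnorm_ge[OF g] by (simp add: norm_mult mult_left_mono)
  show "\<And>z. z \<notin> DD \<Longrightarrow> a * g z = 0" using Hinf_zero[OF g] by simp
qed

definition piece :: "real \<Rightarrow> (complex \<Rightarrow> complex) \<Rightarrow> complex \<Rightarrow> nat \<Rightarrow> complex" where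
  "piece p f z n = ww p n * f (th n z) / (of_nat (mm n) + z)^2"

lemma piece_pair: "piece p f z (2 * j) + piece p f z (Suc (2 * j)) = branch_term p (j + 2) f z"
proof -
  have m1: "mm (2 * j) = j + 2" and m2: "mm (Suc (2 * j)) = j + 2" by (simp_all add: mm_def)
  show ?thesis unfolding piece_def th_def ww_def m1 m2 branch_term_def by (simp add: field_simps)
qed

lemma A_rep:
  assumes p: "0 \<le> p" "p \<le> 1" and f: "f \<in> Hinf"
  shows "A_op p f z = (\<Sum>j. Phi (fst (prod_decode j)) (snd (prod_decode j)) f * GG p (fst (prod_decode j)) (snd (prod_decode j)) z)"
proof (cases "z \<in> DD")
  case False
  thus ?thesis by (simp add: A_op_def GG_def)
next
  case True
  define F where "F = (\<lambda>x. Phi (fst x) (snd x) f * GG p (fst x) (snd x) z)"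
  have nF: "norm (F x) \<le> hnorm f * Bd0 x" for x
    unfolding F_def Bd0_def norm_mult
    by (rule mult_mono[OF Phi_bound[OF f] GG_bound[OF p]]) (auto simp: hnorm_nonneg[OF f])
  have "(\<lambda>x. norm (F x)) summable_on UNIV"
    by (rule Infinite_Sum.abs_summable_on_comparison_test'[OF summable_on_cmult_right[OF Bd0_summable]]) (rule nF)
  hence "F summable_on UNIV" by (rule abs_summable_summable)
  then obtain S where hasF: "(F has_sum S) UNIV" by (auto simp: summable_on_def)
  have inner: "((\<lambda>k. F (n, k)) has_sum piece p f z n) UNIV" for n
  proof (rule norm_summable_imp_has_sum)
    show "(\<lambda>k. F (n, k)) sums piece p f z n"
      unfolding F_def piece_def using taylor_piece[OF f True] by (simp add: divide_inverse mult.assoc)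
    show "summable (\<lambda>k. norm (F (n, k)))"
    proof (rule summable_comparison_test)
      show "\<exists>N. \<forall>k\<ge>N. norm (norm (F (n, k))) \<le> hnorm f * Bd0 (n, k)" using nF by auto
      have "summable (\<lambda>k. Bd0 (n, k))"
        unfolding Bd0_def fst_conv snd_conv by (intro summable_divide summable_geometric) simp
      thus "summable (\<lambda>k. hnorm f * Bd0 (n, k))" by (rule summable_mult)
    qed
  qed
  have "(piece p f z has_sum S) UNIV"
    by (rule has_sum_SigmaD[where f=F and A=UNIV and B="\<lambda>_. UNIV"]) (use hasF inner in auto)
  hence "piece p f z sums S" by (rule has_sum_imp_sums)
  hence "(\<lambda>j. sum (piece p f z) {j * 2..<j * 2 + 2}) sums S" by (rule sums_group) simp
  moreover have "sum (piece p f z) {j * 2..<j * 2 + 2} = branch_term p (j + 2) f z" for j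
  proof -
    have "sum (piece p f z) {j * 2..<j * 2 + 2} = piece p f z (2 * j) + piece p f z (Suc (2 * j))"
      by (simp add: numeral_2_eq_2 mult.commute)
    thus ?thesis by (simp add: piece_pair)
  qed
  ultimately have "(\<lambda>j. branch_term p (j + 2) f z) sums S" by simp
  hence A: "A_op p f z = S" using True by (simp add: A_op_def sums_iff)
  have "((\<lambda>j. F (prod_decode j)) has_sum S) UNIV"
    using has_sum_reindex_bij_betw[of prod_decode UNIV UNIV F S] bij_prod_decode hasF by simp
  hence "(\<lambda>j. F (prod_decode j)) sums S" by (rule has_sum_imp_sums)
  thus ?thesis using A by (simp add: F_def sums_iff)
qed

lemma nuclear_A:
  assumes p: "0 \<le> p" "p \<le> 1"
  shows "nuclear_on_Hinf (A_op p)"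
proof -
  define \<phi> where "\<phi> = (\<lambda>j. Phi (fst (prod_decode j)) (snd (prod_decode j)))"
  define g where "g = (\<lambda>j. GG p (fst (prod_decode j)) (snd (prod_decode j)))"
  define c where "c = (\<lambda>j::nat. 1::real)"
  have rep: "\<And>f z. f \<in> Hinf \<Longrightarrow> A_op p f z = (\<Sum>j. \<phi> j f * g j z)"
    unfolding \<phi>_def g_def by (rule A_rep[OF p])
  have gH: "g j \<in> Hinf" for j unfolding g_def by (rule GG_Hinf[OF p])
  have gB: "cmod (g j z) \<le> Bd0 (prod_decode j)" for j z
    unfolding g_def Bd0_def using GG_bound[OF p] by simp
  have AH: "A_op p f \<in> Hinf" if f: "f \<in> Hinf" for f
  proof -
    have eq: "A_op p f = (\<lambda>z. \<Sum>j. \<phi> j f * g j z)" using rep[OF f] by blast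
    show ?thesis unfolding eq
    proof (rule hinf_series(1))
      show "\<And>j. (\<lambda>z. \<phi> j f * g j z) \<in> Hinf" using gH by (rule Hinf_cmult)
      show "\<And>j z. cmod (\<phi> j f * g j z) \<le> hnorm f * Bd0 (prod_decode j)"
        unfolding norm_mult \<phi>_def
        by (rule mult_mono[OF Phi_bound[OF f] gB]) (auto simp: hnorm_nonneg[OF f])
      show "summable (\<lambda>j. hnorm f * Bd0 (prod_decode j))"
        by (rule summable_mult[OF Bd0_decode_summable])
    qed
  qed
  have sc: "summable (\<lambda>n. c n * hnorm (g n))"
  proof (rule summable_comparison_test[OF _ Bd0_decode_summable])
    show "\<exists>N. \<forall>n\<ge>N. norm (c n * hnorm (g n)) \<le> Bd0 (prod_decode n)"
      using hnorm_GG[OF p] hnorm_nonneg[OF gH] by (auto simp: c_def g_def Bd0_def)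
  qed
  show ?thesis
    unfolding nuclear_on_Hinf_def
  proof (intro conjI ballI)
    show "\<And>f. f \<in> Hinf \<Longrightarrow> A_op p f \<in> Hinf" by (rule AH)
    show "\<exists>\<phi> g c. (\<forall>n. g n \<in> Hinf) \<and> (\<forall>n. lin_functional (\<phi> n)) \<and>
        (\<forall>n. 0 \<le> c n \<and> (\<forall>f\<in>Hinf. cmod (\<phi> n f) \<le> c n * hnorm f)) \<and>
        summable (\<lambda>n. c n * hnorm (g n)) \<and> (\<forall>f\<in>Hinf. \<forall>z. A_op p f z = (\<Sum>n. \<phi> n f * g n z))"
      apply (rule exI[of _ \<phi>], rule exI[of _ g], rule exI[of _ c])
      using gH sc rep Phi_bound by (auto simp: \<phi>_def c_def Phi_lin)
  qed
qed


theorem mainTheorem2: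
  fixes p :: real
  assumes "0 < p" and "p < 1"
  shows "nuclear_on_Hinf (A_op p)
       \<and> (\<forall>f\<in>Hinf. B_op p f \<in> Hinf)
       \<and> (\<exists>J. (\<forall>f\<in>Hinf. J f \<in> Hinf)
              \<and> (\<forall>f\<in>Hinf. (\<lambda>z. J f z - B_op p (J f) z) = f)
              \<and> (\<forall>f\<in>Hinf. J (\<lambda>z. f z - B_op p f z) = f)
              \<and> (\<exists>C. \<forall>f\<in>Hinf. hnorm (J f) \<le> C * hnorm f))"
proof -
  have p': "0 \<le> p" "p \<le> 1" using assms by auto
  show ?thesis using nuclear_A[OF p'] B_Hinf[OF p'] J_part[OF assms] by blast
qed

end
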